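(* Let $\phi$ be a topological flow on a compact metric space $(M,\mathrm{dist})$ having the oriented shadowing property. If $p\in\mathrm{Sing}(\phi)$ is Lyapunov stable, then $\bigcap_{n\ge1}\Omega^+(p,1/n)=\{p\}$; if $p\in\mathrm{Sing}(\phi)$ is Lyapunov unstable, then $\bigcap_{n\ge1}\Omega^-(p,1/n)=\{p\}$.
   Context: A topological flow is a continuous $\phi:\mathbb{R}\times M\to M$ with $\phi(0,x)=x$, $\phi(s+t,x)=\phi(s,\phi(t,x))$; $\mathrm{Sing}(\phi)$ is its set of fixed points. A singularity $p$ is Lyapunov stable if for every neighborhood $V$ of $p$ there is a neighborhood $U$ of $p$ with $\phi(t,x)\in V$ for all $t\ge0$, $x\in U$; Lyapunov unstable if the same holds for $t\le0$. A $d$-pseudotrajectory is a map $\xi:\mathbb{R}\to M$ with $\mathrm{dist}(\xi(t+s),\phi(s,\xi(t)))<d$ for all $t\in\mathbb{R}$, $s\in[0,1]$; $\mathrm{Ps}(d)$ is the set of them. $\mathrm{Rep}$ is the set of orientation-preserving homeomorphisms of $\mathbb{R}$. $\phi$ has the oriented shadowing property if for every $\varepsilon>0$ there is $d>0$ such that for every $\xi\in\mathrm{Ps}(d)$ there are $x\in M$, $h\in\mathrm{Rep}$ with $\mathrm{dist}(\xi(t),\phi(h(t),x))<\varepsilon$ for all $t$. $B(\varepsilon,p)$ is the open ball. For $p\in M$, $\varepsilon>0$: $\Omega^+(p,\varepsilon)=\{\xi(t): \xi\in\mathrm{Ps}(\varepsilon),\ \xi(0)\in B(\varepsilon,p),\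 t\ge0\}$ and $\Omega^-(p,\varepsilon)=\{\xi(t): \xi\in\mathrm{Ps}(\varepsilon),\ \xi(0)\in B(\varepsilon,p),\ t\le0\}$. *)

theory Defs
  imports "HOL-Analysis.Analysis"
begin

definition is_flow :: "(real \<Rightarrow> 'a::topological_space \<Rightarrow> 'a) \<Rightarrow> bool" where
  "is_flow \<phi> \<longleftrightarrow> continuous_on UNIV (\<lambda>(t, x). \<phi> t x)
     \<and> (\<forall>x. \<phi> 0 x = x) \<and> (\<forall>s t x. \<phi> (s + t) x = \<phi> s (\<phi> t x))"

definition Sing :: "(real \<Rightarrow> 'a \<Rightarrow> 'a) \<Rightarrow> 'a set" where
  "Sing \<phi> = {p. \<forall>t. \<phi> t p = p}"

definition lyapunov_stable :: "(real \<Rightarrow> 'a::topological_space \<Rightarrow> 'a) \<Rightarrow> 'a \<Rightarrow> bool" where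
  "lyapunov_stable \<phi> p \<longleftrightarrow> (\<forall>V. open V \<and> p \<in> V \<longrightarrow>
     (\<exists>U. open U \<and> p \<in> U \<and> (\<forall>t\<ge>0. \<forall>x\<in>U. \<phi> t x \<in> V)))"

definition lyapunov_unstable :: "(real \<Rightarrow> 'a::topological_space \<Rightarrow> 'a) \<Rightarrow> 'a \<Rightarrow> bool" where
  "lyapunov_unstable \<phi> p \<longleftrightarrow> (\<forall>V. open V \<and> p \<in> V \<longrightarrow>
     (\<exists>U. open U \<and> p \<in> U \<and> (\<forall>t\<le>0. \<forall>x\<in>U. \<phi> t x \<in> V)))"

definition pseudo_traj :: "(real \<Rightarrow> 'a::metric_space \<Rightarrow> 'a) \<Rightarrow> real \<Rightarrow> (real \<Rightarrow> 'a) set" where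
  "pseudo_traj \<phi> d = {\<xi>. \<forall>t. \<forall>s\<in>{0..1}. dist (\<xi> (t + s)) (\<phi> s (\<xi> t)) < d}"

definition Rep :: "(real \<Rightarrow> real) set" where
  "Rep = {h. homeomorphism UNIV UNIV h (inv h) \<and> mono h}"

definition oriented_shadowing :: "(real \<Rightarrow> 'a::metric_space \<Rightarrow> 'a) \<Rightarrow> bool" where
  "oriented_shadowing \<phi> \<longleftrightarrow> (\<forall>\<epsilon>>0. \<exists>d>0. \<forall>\<xi>\<in>pseudo_traj \<phi> d.
     \<exists>x h. h \<in> Rep \<and> (\<forall>t. dist (\<xi> t) (\<phi> (h t) x) < \<epsilon>))"

definition Omega_plus :: "(real \<Rightarrow> 'a::metric_space \<Rightarrow> 'a) \<Rightarrow> 'a \<Rightarrow> real \<Rightarrow> 'a set" where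
  "Omega_plus \<phi> p \<epsilon> = {\<xi> t | \<xi> t. \<xi> \<in> pseudo_traj \<phi> \<epsilon> \<and> \<xi> 0 \<in> ball p \<epsilon> \<and> t \<ge> 0}"

definition Omega_minus :: "(real \<Rightarrow> 'a::metric_space \<Rightarrow> 'a) \<Rightarrow> 'a \<Rightarrow> real \<Rightarrow> 'a set" where
  "Omega_minus \<phi> p \<epsilon> = {\<xi> t | \<xi> t. \<xi> \<in> pseudo_traj \<phi> \<epsilon> \<and> \<xi> 0 \<in> ball p \<epsilon> \<and> t \<le> 0}"

end

theory Submission
  imports Defs
begin

lemma const_pt:
  assumes "p \<in> Sing \<phi>" "e > 0"
  shows "(\<lambda>_. p) \<in> pseudo_traj \<phi> e"
  using assms by (simp add: pseudo_traj_def Sing_def)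

lemma pt_mono:
  assumes "\<xi> \<in> pseudo_traj \<phi> a" "a \<le> b"
  shows "\<xi> \<in> pseudo_traj \<phi> b"
  using assms unfolding pseudo_traj_def by (auto intro: less_le_trans)

lemma get_n:
  fixes c :: real assumes "c > 0"
  obtains n :: nat where "n \<ge> 1" "1 / real n < c"
proof -
  obtain n :: nat where n: "inverse c < real n" using reals_Archimedean2 by blast
  have pos: "real n > 0" using n assms by (meson inverse_positive_iff_positive less_trans)
  hence "n \<ge> 1" by simp
  moreover have "1 / real n < c" using n assms pos
    by (simp add: field_simps)
  ultimately show ?thesis using that by blast
qed

theorem lemma4p1:
  fixes \<phi> :: "real \<Rightarrow> 'a::metric_space \<Rightarrow> 'a"
  assumes "compact (UNIV :: 'a set)"
    and "is_flow \<phi>"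
    and "oriented_shadowing \<phi>"
    and "p \<in> Sing \<phi>"
  shows "(lyapunov_stable \<phi> p \<longrightarrow> (\<Inter>n\<in>{1::nat..}. Omega_plus \<phi> p (1 / real n)) = {p})
       \<and> (lyapunov_unstable \<phi> p \<longrightarrow> (\<Inter>n\<in>{1::nat..}. Omega_minus \<phi> p (1 / real n)) = {p})"
proof -
  have grp: "\<And>s t x. \<phi> (s + t) x = \<phi> s (\<phi> t x)" using assms(2) by (simp add: is_flow_def)
  have pin: "p \<in> Omega_plus \<phi> p e" "p \<in> Omega_minus \<phi> p e" if "e > 0" for e
    using const_pt[OF assms(4) that] that
    unfolding Omega_plus_def Omega_minus_def by force+
  show ?thesis
  proof (intro conjI impI)
    assume st: "lyapunov_stable \<phi> p"
    show "(\<Inter>n\<in>{1::nat..}. Omega_plus \<phi> p (1 / real n)) = {p}"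
    proof (rule set_eqI, rule iffI)
      fix q assume q: "q \<in> (\<Inter>n\<in>{1::nat..}. Omega_plus \<phi> p (1 / real n))"
      show "q \<in> {p}"
      proof (rule ccontr)
        assume "q \<notin> {p}"
        define r where "r = dist q p"
        have r: "r > 0" using \<open>q \<notin> {p}\<close> by (simp add: r_def)
        obtain U where U: "open U" "p \<in> U" "\<forall>t\<ge>0. \<forall>x\<in>U. \<phi> t x \<in> ball p (r/2)"
          using st r unfolding lyapunov_stable_def by (meson centre_in_ball half_gt_zero open_ball)
        obtain \<delta> where \<delta>: "\<delta> > 0" "ball p \<delta> \<subseteq> U" using U openE by blast
        define e where "e = min (r/2) (\<delta>/2)"
        have e: "e > 0" using r \<delta> by (simp add: e_def)
        obtain d where d: "d > 0" "\<forall>\<xi>\<in>pseudo_traj \<phi> d. \<exists>x h. h \<in> Rep \<and> (\<forall>t. dist (\<xi> t) (\<phi> (h t) x) < e)"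
          using assms(3) e unfolding oriented_shadowing_def by blast
        obtain n :: nat where n: "n \<ge> 1" "1 / real n < min d (\<delta>/2)"
          using get_n[of "min d (\<delta>/2)"] d \<delta> by auto
        have "q \<in> Omega_plus \<phi> p (1 / real n)" using q n by auto
        then obtain \<xi> t where xi: "q = \<xi> t" "\<xi> \<in> pseudo_traj \<phi> (1 / real n)"
          "\<xi> 0 \<in> ball p (1 / real n)" "t \<ge> 0" unfolding Omega_plus_def by blast
        have "\<xi> \<in> pseudo_traj \<phi> d" using pt_mono[OF xi(2)] n by simp
        then obtain x h where h: "h \<in> Rep" "\<forall>t. dist (\<xi> t) (\<phi> (h t) x) < e" using d by blast
        have "dist p (\<phi> (h 0) x) < \<delta>"
          using dist_triangle[of p "\<phi> (h 0) x" "\<xi> 0"] h(2)[rule_format, of 0] xi(3) n e_def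
          by (simp add: dist_commute)
        hence u: "\<phi> (h 0) x \<in> U" using \<delta> by auto
        have "h 0 \<le> h t" using h(1) xi(4) unfolding Rep_def by (auto dest: monoD)
        hence "\<phi> (h t - h 0) (\<phi> (h 0) x) \<in> ball p (r/2)" using U(3) u by auto
        hence "\<phi> (h t) x \<in> ball p (r/2)" using grp[of "h t - h 0" "h 0" x] by simp
        hence "dist q p < r"
          using dist_triangle[of q p "\<phi> (h t) x"] h(2)[rule_format, of t] xi(1) e_def
          by (simp add: dist_commute)
        thus False by (simp add: r_def)
      qed
    next
      fix q assume "q \<in> {p}" thus "q \<in> (\<Inter>n\<in>{1::nat..}. Omega_plus \<phi> p (1 / real n))"
        using pin by auto
    qed
  next
    assume st: "lyapunov_unstable \<phi> p"
    show "(\<Inter>n\<in>{1::nat..}. Omega_minus \<phi> p (1 / real n)) = {p}"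
    proof (rule set_eqI, rule iffI)
      fix q assume q: "q \<in> (\<Inter>n\<in>{1::nat..}. Omega_minus \<phi> p (1 / real n))"
      show "q \<in> {p}"
      proof (rule ccontr)
        assume "q \<notin> {p}"
        define r where "r = dist q p"
        have r: "r > 0" using \<open>q \<notin> {p}\<close> by (simp add: r_def)
        obtain U where U: "open U" "p \<in> U" "\<forall>t\<le>0. \<forall>x\<in>U. \<phi> t x \<in> ball p (r/2)"
          using st r unfolding lyapunov_unstable_def by (meson centre_in_ball half_gt_zero open_ball)
        obtain \<delta> where \<delta>: "\<delta> > 0" "ball p \<delta> \<subseteq> U" using U openE by blast
        define e where "e = min (r/2) (\<delta>/2)"
        have e: "e > 0" using r \<delta> by (simp add: e_def)
        obtain d where d: "d > 0" "\<forall>\<xi>\<in>pseudo_traj \<phi> d. \<exists>x h. h \<in> Rep \<and> (\<forall>t. dist (\<xi> t) (\<phi> (h t) x) < e)"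
          using assms(3) e unfolding oriented_shadowing_def by blast
        obtain n :: nat where n: "n \<ge> 1" "1 / real n < min d (\<delta>/2)"
          using get_n[of "min d (\<delta>/2)"] d \<delta> by auto
        have "q \<in> Omega_minus \<phi> p (1 / real n)" using q n by auto
        then obtain \<xi> t where xi: "q = \<xi> t" "\<xi> \<in> pseudo_traj \<phi> (1 / real n)"
          "\<xi> 0 \<in> ball p (1 / real n)" "t \<le> 0" unfolding Omega_minus_def by blast
        have "\<xi> \<in> pseudo_traj \<phi> d" using pt_mono[OF xi(2)] n by simp
        then obtain x h where h: "h \<in> Rep" "\<forall>t. dist (\<xi> t) (\<phi> (h t) x) < e" using d by blast
        have "dist p (\<phi> (h 0) x) < \<delta>"
          using dist_triangle[of p "\<phi> (h 0) x" "\<xi> 0"] h(2)[rule_format, of 0] xi(3) n e_def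
          by (simp add: dist_commute)
        hence u: "\<phi> (h 0) x \<in> U" using \<delta> by auto
        have "h t \<le> h 0" using h(1) xi(4) unfolding Rep_def by (auto dest: monoD)
        hence "\<phi> (h t - h 0) (\<phi> (h 0) x) \<in> ball p (r/2)" using U(3) u by auto
        hence "\<phi> (h t) x \<in> ball p (r/2)" using grp[of "h t - h 0" "h 0" x] by simp
        hence "dist q p < r"
          using dist_triangle[of q p "\<phi> (h t) x"] h(2)[rule_format, of t] xi(1) e_def
          by (simp add: dist_commute)
        thus False by (simp add: r_def)
      qed
    next
      fix q assume "q \<in> {p}" thus "q \<in> (\<Inter>n\<in>{1::nat..}. Omega_minus \<phi> p (1 / real n))"
        using pin by auto
    qed
  qed
qed

end
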